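(* Let $t\ge 2$, let $n_1,\dots,n_t$ be positive integers, and let $G=K_{n_1,\dots,n_t}$ be the complete $t$-partite graph with partite sets $V_1,\dots,V_t$, $|V_i|=n_i$. Let $N_t=\{1,\dots,t\}$ and $f(I)=\sum_{i\in I}n_i$ for $I\subseteq N_t$. Let $p$ be a positive integer with $f(N_t)>p$. Then for every optimal $\gamma_p(G)$-set $D$ and all $i,j\in N_t\setminus I_D$, we have $\big||D_i|-|D_j|\big|\le 1$.
   Context: A set $S\subseteq V(G)$ is a $p$-dominating set of $G$ if every vertex $v\in V(G)\setminus S$ has at least $p$ neighbors in $S$. The $p$-domination number $\gamma_p(G)$ is the minimum cardinality of a $p$-dominating set of $G$, and a $\gamma_p(G)$-set is a $p$-dominating set of cardinality $\gamma_p(G)$. For $D\subseteq V(G)$ write $D_i=V_i\cap D$ for $i\in N_t$ and $I_D=\{i\in N_t: |D_i|=|V_i|\}$. For a $\gamma_p(G)$-set $D$ with $|I_D|<t$ define $$\mu(D)=\sum_{i\in N_t\setminus I_D}\left|\,|D_i|-\frac{|D|-f(I_D)}{t-|I_D|}\right|.$$ A $\gamma_p(G)$-set $D$ is optimal if: (1) $f(I_D)<p$; (2) $|I_D|\ge |I_S|$ for every $\gamma_p(G)$-set $S$; (3) $\mu(D)\le\mu(S)$ for every $\gamma_p(G)$-set $S$ with $I_S=I_D$. *)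

theory Defs
  imports Complex_Main
begin

definition p_dominating :: "'v set \<Rightarrow> ('v \<Rightarrow> 'v \<Rightarrow> bool) \<Rightarrow> nat \<Rightarrow> 'v set \<Rightarrow> bool" where
  "p_dominating V E p S \<longleftrightarrow> S \<subseteq> V \<and>
     (\<forall>v \<in> V - S. card {u \<in> S. E v u} \<ge> p)"

definition gamma_p :: "'v set \<Rightarrow> ('v \<Rightarrow> 'v \<Rightarrow> bool) \<Rightarrow> nat \<Rightarrow> nat" where
  "gamma_p V E p = Min {card S | S. p_dominating V E p S}"

definition gamma_p_set :: "'v set \<Rightarrow> ('v \<Rightarrow> 'v \<Rightarrow> bool) \<Rightarrow> nat \<Rightarrow> 'v set \<Rightarrow> bool" where
  "gamma_p_set V E p S \<longleftrightarrow> p_dominating V E p S \<and> card S = gamma_p V E p"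

text \<open>Vertices are pairs (i,k) with i in {1..t} and k < n i; the partite set V_i
  consists of the vertices with first component i; two vertices are adjacent
  iff they lie in different partite sets.\<close>

definition mp_verts :: "nat \<Rightarrow> (nat \<Rightarrow> nat) \<Rightarrow> (nat \<times> nat) set" where
  "mp_verts t n = {(i, k). i \<in> {1..t} \<and> k < n i}"

definition mp_part :: "(nat \<Rightarrow> nat) \<Rightarrow> nat \<Rightarrow> (nat \<times> nat) set" where
  "mp_part n i = {(i, k) | k. k < n i}"

definition mp_adj :: "nat \<times> nat \<Rightarrow> nat \<times> nat \<Rightarrow> bool" where
  "mp_adj u v \<longleftrightarrow> fst u \<noteq> fst v"

definition fI :: "(nat \<Rightarrow> nat) \<Rightarrow> nat set \<Rightarrow> nat" where
  "fI n I = (\<Sum>i\<in>I. n i)"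

definition Dpart :: "(nat \<Rightarrow> nat) \<Rightarrow> (nat \<times> nat) set \<Rightarrow> nat \<Rightarrow> (nat \<times> nat) set" where
  "Dpart n D i = mp_part n i \<inter> D"

definition I_set :: "nat \<Rightarrow> (nat \<Rightarrow> nat) \<Rightarrow> (nat \<times> nat) set \<Rightarrow> nat set" where
  "I_set t n D = {i \<in> {1..t}. card (Dpart n D i) = card (mp_part n i)}"

definition mu :: "nat \<Rightarrow> (nat \<Rightarrow> nat) \<Rightarrow> (nat \<times> nat) set \<Rightarrow> real" where
  "mu t n D = (\<Sum>i \<in> {1..t} - I_set t n D.
      \<bar>real (card (Dpart n D i)) -
        (real (card D) - real (fI n (I_set t n D))) / (real t - real (card (I_set t n D)))\<bar>)"

definition optimal :: "nat \<Rightarrow> (nat \<Rightarrow> nat) \<Rightarrow> nat \<Rightarrow> (nat \<times> nat) set \<Rightarrow> bool" where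
  "optimal t n p D \<longleftrightarrow>
     gamma_p_set (mp_verts t n) mp_adj p D \<and>
     card (I_set t n D) < t \<and>
     fI n (I_set t n D) < p \<and>
     (\<forall>S. gamma_p_set (mp_verts t n) mp_adj p S \<longrightarrow> card (I_set t n S) \<le> card (I_set t n D)) \<and>
     (\<forall>S. gamma_p_set (mp_verts t n) mp_adj p S \<and> I_set t n S = I_set t n D \<longrightarrow>
          mu t n D \<le> mu t n S)"

end

theory Submission imports Defs begin

lemma mp_part_iff: "u \<in> mp_part n k \<longleftrightarrow> fst u = k \<and> snd u < n k"
  by (cases u) (auto simp: mp_part_def)

lemma mp_verts_iff: "u \<in> mp_verts t n \<longleftrightarrow> fst u \<in> {1..t} \<and> snd u < n (fst u)"
  by (cases u) (auto simp: mp_verts_def)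

lemma mp_part_img: "mp_part n k = (\<lambda>m. (k,m)) ` {..<n k}"
  by (auto simp: mp_part_def)

lemma card_part: "card (mp_part n k) = n k" and fin_part: "finite (mp_part n k)"
  by (auto simp: mp_part_img card_image inj_on_def)

lemma verts_UN: "mp_verts t n = (\<Union>k\<in>{1..t}. mp_part n k)"
  by (auto simp: mp_verts_iff mp_part_iff)

lemma fin_verts: "finite (mp_verts t n)"
  by (simp add: verts_UN fin_part)

lemma Dpart_iff: "u \<in> Dpart n S k \<longleftrightarrow> u \<in> S \<and> fst u = k \<and> snd u < n k"
  by (auto simp: Dpart_def mp_part_iff)

lemma fin_Dpart: "finite (Dpart n S k)"
  by (simp add: Dpart_def fin_part)

lemma card_Dpart_le: "card (Dpart n S k) \<le> n k"
  by (metis Dpart_def card_mono card_part fin_part inf_le1)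

lemma adj_card:
  assumes "S \<subseteq> mp_verts t n" "finite S"
  shows "card {u\<in>S. mp_adj v u} = card S - card (Dpart n S (fst v))"
proof -
  have "{u\<in>S. mp_adj v u} = S - Dpart n S (fst v)"
    using assms(1) by (auto simp: mp_adj_def Dpart_iff mp_verts_iff)
  moreover have "Dpart n S (fst v) \<subseteq> S" by (auto simp: Dpart_iff)
  ultimately show ?thesis using assms(2) by (simp add: card_Diff_subset fin_Dpart)
qed

lemma card_sum:
  assumes "S \<subseteq> mp_verts t n"
  shows "card S = (\<Sum>k\<in>{1..t}. card (Dpart n S k))"
proof -
  have "S = (\<Union>k\<in>{1..t}. Dpart n S k)"
    using assms by (auto simp: Dpart_iff mp_verts_iff)
  moreover have "card (\<Union>k\<in>{1..t}. Dpart n S k) = (\<Sum>k\<in>{1..t}. card (Dpart n S k))"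
    by (rule card_UN_disjoint) (auto simp: fin_Dpart Dpart_iff)
  ultimately show ?thesis by simp
qed
lemma abs_ineq:
  fixes a x y :: real
  assumes "y < a" "a < x" "y + 2 \<le> x"
  shows "\<bar>x - 1 - a\<bar> + \<bar>y + 1 - a\<bar> < \<bar>x - a\<bar> + \<bar>y - a\<bar>"
  using assms by (auto simp: abs_if)

lemma witness_out:
  assumes "k \<in> {1..t}" "k \<notin> I_set t n D"
  obtains w where "w \<in> mp_part n k" "w \<notin> D" "card (Dpart n D k) < n k"
proof -
  have ne: "card (Dpart n D k) \<noteq> n k" using assms by (simp add: I_set_def card_part)
  then have lt: "card (Dpart n D k) < n k" using card_Dpart_le[of n D k] by simp
  have "Dpart n D k \<subseteq> mp_part n k" by (simp add: Dpart_def)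
  then have "Dpart n D k \<subset> mp_part n k" using ne card_part[of n k] by auto
  then obtain w where "w \<in> mp_part n k" "w \<notin> Dpart n D k" by blast
  then have "w \<notin> D" by (simp add: Dpart_def)
  then show ?thesis using that \<open>w \<in> mp_part n k\<close> lt by blast
qed

lemma key:
  assumes gD: "gamma_p_set (mp_verts t n) mp_adj p D"
    and opt4: "\<forall>S. gamma_p_set (mp_verts t n) mp_adj p S \<longrightarrow> card (I_set t n S) \<le> card (I_set t n D)"
    and opt5: "\<forall>S. gamma_p_set (mp_verts t n) mp_adj p S \<and> I_set t n S = I_set t n D \<longrightarrow>
          mu t n D \<le> mu t n S"
    and i: "i \<in> {1..t} - I_set t n D" and j: "j \<in> {1..t} - I_set t n D"
    and gap: "card (Dpart n D j) + 2 \<le> card (Dpart n D i)"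
    and aj: "real (card (Dpart n D j)) < (real (card D) - real (fI n (I_set t n D))) / (real t - real (card (I_set t n D)))"
    and ai: "(real (card D) - real (fI n (I_set t n D))) / (real t - real (card (I_set t n D))) < real (card (Dpart n D i))"
  shows False
proof -
  define a where "a = (real (card D) - real (fI n (I_set t n D))) / (real t - real (card (I_set t n D)))"
  define V where "V = mp_verts t n"
  have pdD: "p_dominating V mp_adj p D" and cD: "card D = gamma_p V mp_adj p"
    using gD by (auto simp: gamma_p_set_def V_def)
  have DV: "D \<subseteq> V" using pdD by (simp add: p_dominating_def)
  have finD: "finite D" using DV fin_verts V_def finite_subset by blast
  have domD: "\<forall>v\<in>V - D. card {u \<in> D. mp_adj v u} \<ge> p" using pdD by (simp add: p_dominating_def)
  have "card (Dpart n D i) > 0" using gap by simp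
  then obtain x where x: "x \<in> Dpart n D i" by (metis card_gt_0_iff ex_in_conv)
  have xD: "x \<in> D" and fx: "fst x = i" using x by (auto simp: Dpart_iff)
  obtain y where y: "y \<in> mp_part n j" "y \<notin> D" "card (Dpart n D j) < n j"
    using witness_out[of j t n D] j by blast
  have fy: "fst y = j" using y by (simp add: mp_part_iff)
  obtain w where w: "w \<in> mp_part n i" "w \<notin> D" "card (Dpart n D i) < n i"
    using witness_out[of i t n D] i by blast
  have ij: "i \<noteq> j" using gap by auto
  have yV: "y \<in> V" using y j by (auto simp: V_def mp_verts_iff mp_part_iff)
  have wV: "w \<in> V" using w i by (auto simp: V_def mp_verts_iff mp_part_iff)
  have pw: "p \<le> card D - card (Dpart n D i)"
  proof -
    have "p \<le> card {u \<in> D. mp_adj w u}" using domD wV w(2) by blast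
    moreover have "fst w = i" using w(1) by (simp add: mp_part_iff)
    ultimately show ?thesis using adj_card[of D t n w] DV finD by (simp add: V_def)
  qed
  have diD: "card (Dpart n D i) \<le> card D"
    by (rule card_mono[OF finD]) (auto simp: Dpart_iff)
  define S where "S = insert y (D - {x})"
  have finS: "finite S" using finD by (simp add: S_def)
  have cS: "card S = card D" using finD xD y(2)
    by (simp add: S_def card_insert_disjoint) (metis card_0_eq empty_iff Suc_pred neq0_conv)
  have SV: "S \<subseteq> V" using DV yV by (auto simp: S_def)
  have DpO: "\<And>k. k \<noteq> i \<Longrightarrow> k \<noteq> j \<Longrightarrow> Dpart n S k = Dpart n D k"
    using fx fy by (auto simp: S_def Dpart_iff)
  have DpI: "Dpart n S i = Dpart n D i - {x}"
    using fx fy ij by (auto simp: S_def Dpart_iff)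
  have DpJ: "Dpart n S j = insert y (Dpart n D j)"
    using fx fy ij y(1) by (auto simp: S_def Dpart_iff mp_part_iff)
  have cI: "card (Dpart n S i) = card (Dpart n D i) - 1"
    using DpI x by (simp add: fin_Dpart)
  have cJ: "card (Dpart n S j) = card (Dpart n D j) + 1"
    using DpJ y(2) by (simp add: fin_Dpart Dpart_iff)
  have pdS: "p_dominating V mp_adj p S"
    unfolding p_dominating_def
  proof (intro conjI ballI)
    show "S \<subseteq> V" by (rule SV)
    fix v assume v: "v \<in> V - S"
    have eq: "card {u \<in> S. mp_adj v u} = card S - card (Dpart n S (fst v))"
      using adj_card[of S t n v] SV finS by (simp add: V_def)
    show "p \<le> card {u \<in> S. mp_adj v u}"
    proof (cases "fst v = i")
      case True
      then show ?thesis using eq cI cS pw by simp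
    next
      case F1: False
      show ?thesis
      proof (cases "fst v = j")
        case True
        then show ?thesis using eq cJ cS pw gap diD by simp
      next
        case False
        have "v \<in> V - D" using v F1 False fx fy by (auto simp: S_def)
        then have "p \<le> card {u \<in> D. mp_adj v u}" using domD by blast
        then show ?thesis using eq cS DpO[OF F1 False] adj_card[of D t n v] DV finD
          by (simp add: V_def)
      qed
    qed
  qed
  have gS: "gamma_p_set (mp_verts t n) mp_adj p S"
    using pdS cS cD by (simp add: gamma_p_set_def V_def)
  have finI: "finite (I_set t n D)" by (simp add: I_set_def)
  have jI: "j \<notin> I_set t n D" using j by simp
  have same: "\<And>k. k \<noteq> j \<Longrightarrow> (card (Dpart n S k) = n k \<longleftrightarrow> card (Dpart n D k) = n k)"
  proof -
    fix k assume "k \<noteq> j"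
    then show "(card (Dpart n S k) = n k \<longleftrightarrow> card (Dpart n D k) = n k)"
      using DpO[of k] cI w(3) by (cases "k = i") auto
  qed
  show False
  proof (cases "card (Dpart n S j) = n j")
    case True
    have "I_set t n S = insert j (I_set t n D)"
      using True same j y(3)
      by (auto simp: I_set_def card_part) (metis less_irrefl)
    then have "card (I_set t n S) = card (I_set t n D) + 1"
      using finI jI by simp
    then show False using opt4 gS by fastforce
  next
    case False
    have IS: "I_set t n S = I_set t n D"
      using False same j y(3)
      by (auto simp: I_set_def card_part) (metis less_irrefl)+
    have le: "mu t n D \<le> mu t n S" using opt5 gS IS by blast
    define J where "J = {1..t} - I_set t n D"
    have finJ: "finite J" by (simp add: J_def)
    have iJ: "i \<in> J" and jJ: "j \<in> J - {i}" using i j ij by (auto simp: J_def)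
    define g where "g = (\<lambda>X k. \<bar>real (card (Dpart n X k)) - a\<bar>)"
    have muD: "mu t n D = sum (g D) J" by (simp add: mu_def J_def g_def a_def)
    have muS: "mu t n S = sum (g S) J" by (simp add: mu_def J_def g_def a_def IS cS)
    have split: "\<And>X. sum (g X) J = g X i + g X j + sum (g X) (J - {i} - {j})"
      using finJ iJ jJ by (simp add: sum.remove)
    have rest: "sum (g S) (J - {i} - {j}) = sum (g D) (J - {i} - {j})"
      by (rule sum.cong) (auto simp: g_def DpO)
    have "g S i + g S j < g D i + g D j"
      using abs_ineq[of "real (card (Dpart n D j))" a "real (card (Dpart n D i))"]
        aj ai gap cI cJ unfolding g_def a_def
      by (simp add: of_nat_diff)
    then have "mu t n S < mu t n D" using muD muS split[of S] split[of D] rest by linarith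
    then show False using le by linarith
  qed
qed

theorem lemma4:
  fixes t p :: nat and n :: "nat \<Rightarrow> nat" and D :: "(nat \<times> nat) set"
  assumes "t \<ge> 2"
    and "\<forall>i \<in> {1..t}. n i > 0"
    and "p > 0"
    and "fI n {1..t} > p"
    and "optimal t n p D"
    and "i \<in> {1..t} - I_set t n D"
    and "j \<in> {1..t} - I_set t n D"
  shows "\<bar>int (card (Dpart n D i)) - int (card (Dpart n D j))\<bar> \<le> 1"
proof (rule ccontr)
  assume neg: "\<not> ?thesis"
  have gD: "gamma_p_set (mp_verts t n) mp_adj p D"
    and cIt: "card (I_set t n D) < t"
    and opt4: "\<forall>S. gamma_p_set (mp_verts t n) mp_adj p S \<longrightarrow> card (I_set t n S) \<le> card (I_set t n D)"
    and opt5: "\<forall>S. gamma_p_set (mp_verts t n) mp_adj p S \<and> I_set t n S = I_set t n D \<longrightarrow>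
          mu t n D \<le> mu t n S"
    using assms(5) by (auto simp: optimal_def)
  define I where "I = I_set t n D"
  define J where "J = {1..t} - I"
  define d where "d = (\<lambda>k. card (Dpart n D k))"
  define a where "a = (real (card D) - real (fI n I)) / (real t - real (card I))"
  have DV: "D \<subseteq> mp_verts t n" using gD by (simp add: gamma_p_set_def p_dominating_def)
  have IT: "I \<subseteq> {1..t}" by (auto simp: I_def I_set_def)
  have finJ: "finite J" by (simp add: J_def)
  have cJ: "card J = t - card I" using IT by (simp add: J_def card_Diff_subset finite_subset)
  have cJr: "real t - real (card I) = real (card J)" using cJ cIt by (simp add: I_def of_nat_diff)
  have iJ: "i \<in> J" and jJ: "j \<in> J" using assms(6,7) by (auto simp: J_def I_def)
  have Jpos: "real (card J) > 0" using iJ finJ card_gt_0_iff by fastforce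
  have "card D = (\<Sum>k\<in>{1..t}. d k)" using card_sum[OF DV] by (simp add: d_def)
  also have "\<dots> = sum d I + sum d J"
    unfolding J_def using sum.subset_diff[OF IT, of d] by simp
  also have "sum d I = fI n I"
    unfolding fI_def by (rule sum.cong) (auto simp: d_def I_def I_set_def card_part)
  finally have "real (card D) - real (fI n I) = (\<Sum>k\<in>J. real (d k))" by simp
  then have aJ: "a * real (card J) = (\<Sum>k\<in>J. real (d k))"
    using Jpos cJr by (simp add: a_def)
  have "Max (d ` J) \<in> d ` J" using finJ iJ by (intro Max_in) auto
  then obtain M where M1: "M \<in> J" and "d M = Max (d ` J)" by auto
  then have M: "M \<in> J" "\<forall>k\<in>J. d k \<le> d M" using finJ by auto
  have "Min (d ` J) \<in> d ` J" using finJ iJ by (intro Min_in) auto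
  then obtain m where m1: "m \<in> J" and "d m = Min (d ` J)" by auto
  then have m: "m \<in> J" "\<forall>k\<in>J. d m \<le> d k" using finJ by auto
  have "d i \<le> d M" "d j \<le> d M" "d m \<le> d i" "d m \<le> d j" using M m iJ jJ by auto
  then have gap: "d m + 2 \<le> d M" using neg unfolding d_def by linarith
  have aM: "a < real (d M)"
  proof (rule ccontr)
    assume "\<not> a < real (d M)"
    have "(\<Sum>k\<in>J. real (d k)) < (\<Sum>k\<in>J. a)"
    proof (rule sum_strict_mono_ex1[OF finJ])
      show "\<forall>k\<in>J. real (d k) \<le> a" using M \<open>\<not> a < real (d M)\<close> by force
      show "\<exists>k\<in>J. real (d k) < a" using m(1) gap \<open>\<not> a < real (d M)\<close> by force
    qed
    then show False using aJ by (simp add: mult.commute)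
  qed
  have am: "real (d m) < a"
  proof (rule ccontr)
    assume "\<not> real (d m) < a"
    have "(\<Sum>k\<in>J. a) < (\<Sum>k\<in>J. real (d k))"
    proof (rule sum_strict_mono_ex1[OF finJ])
      show "\<forall>k\<in>J. a \<le> real (d k)" using m \<open>\<not> real (d m) < a\<close> by force
      show "\<exists>k\<in>J. a < real (d k)" using M(1) gap \<open>\<not> real (d m) < a\<close> by force
    qed
    then show False using aJ by (simp add: mult.commute)
  qed
  show False
    using key[OF gD opt4 opt5, of M m] M(1) m(1) gap aM am
    unfolding J_def I_def d_def a_def by blast
qed

end
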